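(* Let $(G,* )$ be a metrizable topological group. The following are equivalent: (1) $G$ has the property ${\sf S}_c(\mathcal{O}_{\sf nbd},\mathcal{O})$; (2) $G$ has the Haver property with respect to every left-invariant metric on $G$ that is compatible with (generates) the topology of $G$.
   Context: For a topological group $(G,* )$ with identity $e$ and a neighborhood $U$ of $e$, let $\mathcal{O}(U)=\{x*U: x\in G\}$, an open cover of $G$, and $\mathcal{O}_{\sf nbd}=\{\mathcal{O}(U): U \text{ a neighborhood of } e\}$. $\mathcal{O}$ denotes the collection of all open covers of $G$. A family $\mathcal{B}$ refines a family $\mathcal{A}$ if every member of $\mathcal{B}$ is contained in some member of $\mathcal{A}$. For collections $\mathcal{A},\mathcal{B}$ of families of subsets of $G$, ${\sf S}_c(\mathcal{A},\mathcal{B})$ is the statement: for each sequence $(A_n:n<\infty)$ of elements of $\mathcal{A}$ there is a sequence $(B_n:n<\infty)$ such that each $B_n$ is a pairwise disjoint family of open sets refining $A_n$ and $\bigcup_{n<\infty}B_n\in\mathcal{B}$. A metrizable space $X$ is Haver with respect to a metric $d$ if for each sequence $(\epsilon_n:n<\infty)$ of positive reals there is a sequence $(\mathcal{V}_n:n<\infty)$ where each $\mathcal{V}_n$ is a pairwise disjoint family of open sets each of $d$-diameter less than $\epsilon_n$, such that $\bigcup_{n<\infty}\mathcal{V}_n$ covers $X$. A metric $d$ on $G$ is left-invariant if $d(g*x,g*y)=d(x,y)$ for all $g,x,y\in G$. *)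

theory Defs
  imports "HOL-Analysis.Analysis"
begin

text \<open>Groups are written additively (type class topological_group_add, which is NOT
assumed commutative); the identity e is 0 and x * U is the left translate (+) x ` U.\<close>

definition nbd_cover :: "'a::topological_group_add set \<Rightarrow> 'a set set" where
  "nbd_cover U = {(\<lambda>y. x + y) ` U | x. True}"

definition refines :: "'a set set \<Rightarrow> 'a set set \<Rightarrow> bool" where
  "refines B A \<longleftrightarrow> (\<forall>b\<in>B. \<exists>a\<in>A. b \<subseteq> a)"

text \<open>S_c(O_nbd, O): neighbourhoods of the identity are taken to be open sets containing 0.\<close>
definition Sc_nbd_open :: "'a::topological_group_add itself \<Rightarrow> bool" where
  "Sc_nbd_open _ \<longleftrightarrow>
     (\<forall>U :: nat \<Rightarrow> 'a set. (\<forall>n. open (U n) \<and> 0 \<in> U n) \<longrightarrow>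
        (\<exists>B :: nat \<Rightarrow> 'a set set.
            (\<forall>n. disjoint (B n) \<and> (\<forall>b\<in>B n. open b) \<and> refines (B n) (nbd_cover (U n))) \<and>
            \<Union>(\<Union>n. B n) = UNIV))"

text \<open>Diameter with respect to a metric d, valued in the extended reals (empty set: -\<infinity>).\<close>
definition d_diam :: "('a \<Rightarrow> 'a \<Rightarrow> real) \<Rightarrow> 'a set \<Rightarrow> ereal" where
  "d_diam d S = (SUP x\<in>S. SUP y\<in>S. ereal (d x y))"

definition Haver_wrt :: "('a::topological_space \<Rightarrow> 'a \<Rightarrow> real) \<Rightarrow> bool" where
  "Haver_wrt d \<longleftrightarrow>
     (\<forall>\<epsilon> :: nat \<Rightarrow> real. (\<forall>n. \<epsilon> n > 0) \<longrightarrow>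
        (\<exists>V :: nat \<Rightarrow> 'a set set.
            (\<forall>n. disjoint (V n) \<and> (\<forall>v\<in>V n. open v \<and> d_diam d v < ereal (\<epsilon> n))) \<and>
            \<Union>(\<Union>n. V n) = UNIV))"

definition compatible_metric :: "('a::topological_space \<Rightarrow> 'a \<Rightarrow> real) \<Rightarrow> bool" where
  "compatible_metric d \<longleftrightarrow> Metric_space UNIV d \<and> Metric_space.mtopology UNIV d = euclidean"

definition left_invariant :: "('a::plus \<Rightarrow> 'a \<Rightarrow> real) \<Rightarrow> bool" where
  "left_invariant d \<longleftrightarrow> (\<forall>g x y. d (g + x) (g + y) = d x y)"

end

theory Submission
  imports Defs
begin


lemma tg_open_translate:
  fixes S :: "'a::topological_group_add set"
  assumes "open S" shows "open ((\<lambda>y. a + y) ` S)"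
proof -
  have "(\<lambda>y. a + y) ` S = (\<lambda>y. -a + y) -` S"
  proof (intro set_eqI iffI)
    fix x assume "x \<in> (\<lambda>y. -a + y) -` S"
    then have "-a + x \<in> S" by simp
    moreover have "x = a + (-a + x)" by (simp add: add.assoc[symmetric])
    ultimately show "x \<in> (\<lambda>y. a + y) ` S" by blast
  qed (auto simp: add.assoc[symmetric])
  moreover have "open ((\<lambda>y. -a + y) -` S)"
    by (intro open_vimage assms continuous_intros)
  ultimately show ?thesis by simp
qed

lemma tg_open_neg:
  fixes S :: "'a::topological_group_add set"
  assumes "open S" shows "open (uminus -` S)"
  by (intro open_vimage assms continuous_intros)

lemma tg_two:
  fixes U :: "'a::topological_group_add set"
  assumes "open U" "0 \<in> U"
  shows "\<exists>V. open V \<and> 0 \<in> V \<and> (\<forall>a\<in>V. \<forall>b\<in>V. a + b \<in> U)"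
proof -
  have "open ((\<lambda>p. fst p + snd p) -` U)"
    by (intro open_vimage assms continuous_intros)
  moreover have "(0::'a,0::'a) \<in> (\<lambda>p. fst p + snd p) -` U" using assms by simp
  ultimately obtain A B where "open A" "open B" "(0,0) \<in> A \<times> B" "A \<times> B \<subseteq> (\<lambda>p. fst p + snd p) -` U"
    by (rule open_prod_elim)
  then show ?thesis by (intro exI[of _ "A \<inter> B"]) auto
qed

lemma tg_three:
  fixes U :: "'a::topological_group_add set"
  assumes "open U" "0 \<in> U"
  shows "\<exists>V. open V \<and> 0 \<in> V \<and> (\<forall>x\<in>V. -x \<in> V) \<and> (\<forall>a\<in>V. \<forall>b\<in>V. \<forall>c\<in>V. a + b + c \<in> U)"
proof -
  obtain V1 where V1: "open V1" "0 \<in> V1" "\<forall>a\<in>V1. \<forall>b\<in>V1. a + b \<in> U" using tg_two[OF assms] by blast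
  obtain V2 where V2: "open V2" "0 \<in> V2" "\<forall>a\<in>V2. \<forall>b\<in>V2. a + b \<in> V1" using tg_two[OF V1(1,2)] by blast
  define W where "W = V1 \<inter> V2"
  define V where "V = W \<inter> uminus -` W"
  have "open V" unfolding V_def W_def using V1 V2 by (intro open_Int tg_open_neg) auto
  moreover have "0 \<in> V" using V1 V2 by (simp add: V_def W_def)
  moreover have "\<forall>x\<in>V. -x \<in> V" by (auto simp: V_def)
  moreover have "\<forall>a\<in>V. \<forall>b\<in>V. \<forall>c\<in>V. a + b + c \<in> U"
    using V1 V2 by (auto simp: V_def W_def)
  ultimately show ?thesis by blast
qed

locale BK =
  fixes V :: "nat \<Rightarrow> 'a::topological_group_add set"
  assumes V0: "V 0 = UNIV"
    and Vopen: "open (V n)"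
    and Vzero: "0 \<in> V n"
    and Vsym: "x \<in> V n \<Longrightarrow> -x \<in> V n"
    and V3: "a \<in> V (Suc n) \<Longrightarrow> b \<in> V (Suc n) \<Longrightarrow> c \<in> V (Suc n) \<Longrightarrow> a + b + c \<in> V n"
    and Vsep: "(\<And>n. x \<in> V n) \<Longrightarrow> x = 0"
    and Vbase: "open S \<Longrightarrow> 0 \<in> S \<Longrightarrow> \<exists>n. V n \<subseteq> S"
begin

lemma Vsuc: "V (Suc n) \<subseteq> V n"
proof
  fix x assume "x \<in> V (Suc n)"
  then have "x + 0 + 0 \<in> V n" using V3 Vzero by blast
  then show "x \<in> V n" by simp
qed

lemma Vmono: "m \<le> n \<Longrightarrow> V n \<subseteq> V m"
  by (induction n rule: dec_induct) (use Vsuc in auto)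

definition f :: "'a \<Rightarrow> real" where
  "f x = Inf {(1/2)^n | n. x \<in> V n}"

lemma f_set_ne: "{(1/2::real)^n | n. x \<in> V n} \<noteq> {}"
  using V0 by auto

lemma f_set_bdd: "bdd_below {(1/2::real)^n | n. x \<in> V n}"
  by (rule bdd_belowI[of _ 0]) auto

lemma f_upper: "x \<in> V n \<Longrightarrow> f x \<le> (1/2)^n"
  unfolding f_def by (rule cInf_lower[OF _ f_set_bdd]) auto

lemma f_nonneg: "0 \<le> f x"
  unfolding f_def by (rule cInf_greatest[OF f_set_ne]) auto

lemma f_le1: "f x \<le> 1"
  using f_upper[of x 0] V0 by simp

lemma f_lower: "x \<notin> V (Suc k) \<Longrightarrow> (1/2)^k \<le> f x"
  unfolding f_def
proof (rule cInf_greatest[OF f_set_ne], clarify)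
  fix n assume "x \<notin> V (Suc k)" "x \<in> V n"
  then have "n \<le> k" using Vmono[of "Suc k" n] by (cases "Suc k \<le> n") auto
  then show "(1/2::real)^k \<le> (1/2)^n" by (simp add: power_decreasing)
qed

lemma f_small: "f x < 2 * (1/2)^k \<Longrightarrow> x \<in> V k"
proof (cases k)
  case 0 then show ?thesis using V0 by simp
next
  case (Suc j)
  assume "f x < 2 * (1/2)^k"
  then have "f x < (1/2)^j" using Suc by simp
  then show ?thesis using f_lower[of x j] Suc by fastforce
qed

lemma f_zero: "f 0 = 0"
proof -
  have "\<forall>n. f 0 \<le> (1/2)^n" using f_upper Vzero by blast
  moreover have "\<not> f 0 > 0"
  proof
    assume "f 0 > 0"
    then obtain n where "(1/2::real)^n < f 0" using real_arch_pow_inv[of "f 0" "1/2"] by auto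
    with \<open>\<forall>n. f 0 \<le> (1/2)^n\<close> show False by (meson not_le)
  qed
  ultimately show ?thesis using f_nonneg[of 0] by simp
qed

lemma f_neg: "f (-x) = f x"
proof -
  have "\<And>n. -x \<in> V n \<longleftrightarrow> x \<in> V n" using Vsym by (metis minus_minus)
  then show ?thesis unfolding f_def by simp
qed

lemma f_eq0: "f x = 0 \<Longrightarrow> x = 0"
  by (rule Vsep, rule f_small) simp

definition sf :: "'a list \<Rightarrow> real" where
  "sf zs = sum_list (map f zs)"

lemma sf_nonneg: "0 \<le> sf zs"
  unfolding sf_def by (induction zs) (auto intro: add_nonneg_nonneg f_nonneg)

lemma sf_append: "sf (xs @ ys) = sf xs + sf ys"
  by (simp add: sf_def)

lemma sf_Cons: "sf (x # ys) = f x + sf ys"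
  by (simp add: sf_def)

lemma sf_zero: "sf zs = 0 \<Longrightarrow> \<forall>z\<in>set zs. f z = 0"
proof (induction zs)
  case (Cons a zs)
  then have "f a + sf zs = 0" by (simp add: sf_Cons)
  then have "f a = 0 \<and> sf zs = 0" using f_nonneg[of a] sf_nonneg[of zs] by linarith
  then show ?case using Cons by simp
qed simp

lemma birkhoff: "f (sum_list zs) \<le> 2 * sf zs"
proof (induction "length zs" arbitrary: zs rule: less_induct)
  case less
  define S where "S = sf zs"
  show ?case
  proof (cases "S \<ge> 1/2")
    case True then show ?thesis using f_le1[of "sum_list zs"] S_def by simp
  next
    case False
    show ?thesis
    proof (cases "S = 0")
      case True
      then have "\<forall>z\<in>set zs. f z = 0"
        unfolding S_def using sf_zero by blast
      then have "\<forall>z\<in>set zs. z = 0" using f_eq0 by blast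
      then have "sum_list zs = 0" by (induction zs) auto
      then show ?thesis using f_zero sf_nonneg by simp
    next
      case Snz: False
      then have Spos: "S > 0" using sf_nonneg S_def by (simp add: order_less_le)
      define P where "P j \<longleftrightarrow> S/2 < sf (take (Suc j) zs)" for j
      have Plen: "P (length zs)" using Spos by (simp add: P_def S_def)
      define j where "j = (LEAST j. P j)"
      have Pj: "P j" unfolding j_def by (rule LeastI[where P=P, OF Plen])
      have jle: "j \<le> length zs" unfolding j_def by (rule Least_le[where P=P, OF Plen])
      have prev: "sf (take j zs) \<le> S/2"
      proof (cases j)
        case 0 then show ?thesis using Spos by (simp add: sf_def)
      next
        case (Suc i)
        then have "\<not> P i" using not_less_Least[of i P] j_def by simp
        then show ?thesis using Suc by (simp add: P_def)
      qed
      have jlt: "j < length zs"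
      proof (rule ccontr)
        assume "\<not> j < length zs"
        then have "j = length zs" using jle by simp
        then have "sf (take j zs) = S" by (simp add: S_def)
        with prev Spos show False by simp
      qed
      define as where "as = take j zs"
      define c where "c = zs ! j"
      define bs where "bs = drop (Suc j) zs"
      have zs_eq: "zs = as @ c # bs" unfolding as_def c_def bs_def
        using id_take_nth_drop[OF jlt] .
      have Ssum: "S = sf as + f c + sf bs" by (simp add: S_def zs_eq sf_append sf_Cons)
      have "take (Suc j) zs = as @ [c]"
        unfolding as_def c_def using jlt by (simp add: take_Suc_conv_app_nth)
      then have "S/2 < sf as + f c" using Pj by (simp only: P_def) (simp add: sf_def)
      then have bs_small: "sf bs < S/2" using Ssum by simp
      have as_small: "sf as \<le> S/2" using prev as_def by simp
      have la: "length as < length zs" using jlt by (simp add: as_def)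
      have lb: "length bs < length zs" using jlt by (simp add: bs_def)
      have IHa: "f (sum_list as) \<le> 2 * sf as" using less(1)[OF la] .
      have IHb: "f (sum_list bs) \<le> 2 * sf bs" using less(1)[OF lb] .
      have fa: "f (sum_list as) \<le> S" using IHa as_small by simp
      have fb: "f (sum_list bs) \<le> S" using IHb bs_small by simp
      have fc: "f c \<le> S" using Ssum sf_nonneg[of as] sf_nonneg[of bs] by simp
      define k where "k = (LEAST k. (1/2::real)^(Suc k) \<le> S)"
      have ex: "\<exists>k. (1/2::real)^(Suc k) \<le> S"
      proof -
        obtain n where "(1/2::real)^n < S" using real_arch_pow_inv[of S "1/2"] Spos by auto
        moreover have "(1/2::real)^(Suc n) \<le> (1/2)^n" by (rule power_decreasing) auto
        ultimately have "(1/2::real)^(Suc n) \<le> S" by linarith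
        then show ?thesis by blast
      qed
      have klow: "(1/2::real)^(Suc k) \<le> S" unfolding k_def using LeastI_ex[OF ex] .
      have khigh: "S < (1/2)^k"
      proof (cases k)
        case 0 then show ?thesis using False by simp
      next
        case (Suc i)
        then have "i < (LEAST k. (1/2::real)^(Suc k) \<le> S)" using k_def by simp
        then have "\<not> (1/2::real)^(Suc i) \<le> S" by (rule not_less_Least)
        then show ?thesis using Suc by simp
      qed
      have hk: "S < 2 * (1/2)^(Suc k)" using khigh by simp
      have "sum_list as \<in> V (Suc k)" by (rule f_small) (use fa hk in simp)
      moreover have "c \<in> V (Suc k)" by (rule f_small) (use fc hk in simp)
      moreover have "sum_list bs \<in> V (Suc k)" by (rule f_small) (use fb hk in simp)
      ultimately have "sum_list as + c + sum_list bs \<in> V k" by (rule V3)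
      moreover have "sum_list zs = sum_list as + c + sum_list bs"
        by (simp add: zs_eq add.assoc)
      ultimately have "f (sum_list zs) \<le> (1/2)^k" using f_upper by simp
      also have "\<dots> = 2 * (1/2)^(Suc k)" by simp
      also have "\<dots> \<le> 2 * S" using klow by simp
      finally show ?thesis by (simp add: S_def)
    qed
  qed
qed


definition N :: "'a \<Rightarrow> real" where
  "N w = Inf {sf zs | zs. sum_list zs = w}"

lemma N_set_ne: "{sf zs | zs. sum_list zs = w} \<noteq> {}"
  by (auto intro!: exI[of _ "[w]"])

lemma N_set_bdd: "bdd_below {sf zs | zs. sum_list zs = w}"
  by (rule bdd_belowI[of _ 0]) (auto simp: sf_nonneg)

lemma N_le: "sum_list zs = w \<Longrightarrow> N w \<le> sf zs"
  unfolding N_def by (rule cInf_lower[OF _ N_set_bdd]) auto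

lemma N_le_f: "N w \<le> f w"
  using N_le[of "[w]" w] by (simp add: sf_def)

lemma N_ge_f: "f w \<le> 2 * N w"
proof -
  have "f w / 2 \<le> N w" unfolding N_def
  proof (rule cInf_greatest[OF N_set_ne], clarify)
    fix zs show "f (sum_list zs) / 2 \<le> sf zs" using birkhoff[of zs] by simp
  qed
  then show ?thesis by simp
qed

lemma N_nonneg: "0 \<le> N w"
  using N_ge_f[of w] f_nonneg[of w] by simp

lemma N_zero: "N 0 = 0"
  using N_le_f[of 0] N_nonneg[of 0] f_zero by simp

lemma N_eq0: "N w = 0 \<Longrightarrow> w = 0"
  using N_ge_f[of w] f_nonneg[of w] f_eq0 by simp

lemma N_add: "N (a + b) \<le> N a + N b"
proof -
  have "\<forall>ws. sum_list ws = b \<longrightarrow> N (a + b) - sf ws \<le> N a"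
  proof (intro allI impI)
    fix ws assume ws: "sum_list ws = b"
    have "N (a + b) - sf ws \<le> sf zs" if "sum_list zs = a" for zs
      using N_le[of "zs @ ws" "a + b"] that ws by (simp add: sf_append)
    then show "N (a + b) - sf ws \<le> N a" unfolding N_def
      by (intro cInf_greatest[OF N_set_ne]) auto
  qed
  then have "N (a + b) - N a \<le> N b" unfolding N_def[of b]
    by (intro cInf_greatest[OF N_set_ne]) force
  then show ?thesis by simp
qed

lemma sum_list_neg_rev: "sum_list (rev (map uminus zs)) = - sum_list (zs :: 'a list)"
  by (induction zs) (auto simp: minus_add)

lemma sf_neg_rev: "sf (rev (map uminus zs)) = sf zs"
  by (induction zs) (auto simp: sf_def f_neg)

lemma N_neg_le: "N (- w) \<le> N w"
  unfolding N_def[of w]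
proof (rule cInf_greatest[OF N_set_ne], clarify)
  fix zs assume "w = sum_list zs"
  then show "N (- sum_list zs) \<le> sf zs"
    using N_le[of "rev (map uminus zs)" "- sum_list zs"] by (simp add: sum_list_neg_rev sf_neg_rev)
qed

lemma N_neg: "N (- w) = N w"
  using N_neg_le[of w] N_neg_le[of "-w"] by simp

lemma negadd: "(- x + y = 0) = (x = (y::'a))"
proof
  assume "- x + y = 0"
  then have "x + (- x + y) = x" by simp
  then show "x = y" by (simp add: add.assoc[symmetric])
qed simp

definition dd :: "'a \<Rightarrow> 'a \<Rightarrow> real" where
  "dd x y = N (- x + y)"

lemma dd_metric: "Metric_space UNIV dd"
proof
  fix x y z :: 'a
  show "0 \<le> dd x y" by (simp add: dd_def N_nonneg)
  have "- y + x = - (- x + y)" by (simp add: minus_add)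
  then show "dd x y = dd y x" unfolding dd_def by (simp add: N_neg)
  show "(dd x y = 0) = (x = y)" unfolding dd_def
    using N_eq0[of "-x+y"] N_zero by (auto simp: negadd)
  have "- x + z = (- x + y) + (- y + z)" by (simp add: add.assoc[symmetric])
  then show "dd x z \<le> dd x y + dd y z" unfolding dd_def using N_add[of "-x+y" "-y+z"] by simp
qed

lemma dd_left_inv: "left_invariant dd"
  unfolding left_invariant_def dd_def by (simp add: minus_add add.assoc[symmetric])

interpretation DD: Metric_space UNIV dd by (rule dd_metric)

lemma dd_open: "DD.mtopology = euclidean"
proof (rule topology_eq[THEN iffD2], intro allI)
  fix S :: "'a set"
  show "openin DD.mtopology S \<longleftrightarrow> openin euclidean S"
  proof
    assume "openin DD.mtopology S"
    then have H: "\<forall>x\<in>S. \<exists>r>0. DD.mball x r \<subseteq> S" by (simp add: DD.openin_mtopology)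
    show "openin euclidean S" unfolding open_openin[symmetric] open_subopen[of S]
    proof
      fix y assume "y \<in> S"
      then obtain r where r: "r > 0" "DD.mball y r \<subseteq> S" using H by blast
      obtain n where n: "(1/2::real)^n < r" using real_arch_pow_inv[of r "1/2"] r by auto
      have "(\<lambda>v. y + v) ` V n \<subseteq> S"
      proof
        fix z assume "z \<in> (\<lambda>v. y + v) ` V n"
        then obtain v where v: "v \<in> V n" "z = y + v" by auto
        have "dd y z = N v" by (simp add: dd_def v(2) add.assoc[symmetric])
        also have "\<dots> \<le> f v" by (rule N_le_f)
        also have "\<dots> \<le> (1/2)^n" using f_upper v(1) .
        finally have "z \<in> DD.mball y r" using n by simp
        then show "z \<in> S" using r by blast
      qed
      moreover have "y \<in> (\<lambda>v. y + v) ` V n" using Vzero by (auto intro: image_eqI[of _ _ 0])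
      moreover have "open ((\<lambda>v. y + v) ` V n)" by (rule tg_open_translate[OF Vopen])
      ultimately show "\<exists>T. open T \<and> y \<in> T \<and> T \<subseteq> S" by blast
    qed
  next
    assume "openin euclidean S"
    then have So: "open S" by simp
    show "openin DD.mtopology S" unfolding DD.openin_mtopology
    proof (intro conjI allI impI)
      fix x assume "x \<in> S"
      have "open ((\<lambda>y. -x + y) ` S)" by (rule tg_open_translate[OF So])
      moreover have "0 \<in> (\<lambda>y. -x + y) ` S" using \<open>x \<in> S\<close> by (auto intro: image_eqI[of _ _ x])
      ultimately obtain n where n: "V n \<subseteq> (\<lambda>y. -x + y) ` S" using Vbase by blast
      have "DD.mball x ((1/2)^n) \<subseteq> S"
      proof
        fix z assume "z \<in> DD.mball x ((1/2)^n)"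
        then have "N (-x + z) < (1/2)^n" by (simp add: dd_def)
        then have "f (-x + z) < 2 * (1/2)^n" using N_ge_f[of "-x+z"] by simp
        then have "-x + z \<in> V n" by (rule f_small)
        then obtain y where "y \<in> S" "-x + z = -x + y" using n by auto
        then show "z \<in> S" by simp
      qed
      then show "\<exists>r>0. DD.mball x r \<subseteq> S" by (intro exI[of _ "(1/2)^n"]) simp
    qed simp
  qed
qed

lemma dd_compatible: "compatible_metric dd"
  unfolding compatible_metric_def using dd_metric dd_open by simp

lemma dd_ball: "open U \<Longrightarrow> 0 \<in> U \<Longrightarrow> \<exists>r>0. \<forall>w. N w < r \<longrightarrow> w \<in> U"
proof -
  assume "open U" "0 \<in> U"
  then have "openin DD.mtopology U" using dd_open by simp
  then obtain r where "r > 0" "DD.mball 0 r \<subseteq> U" using \<open>0 \<in> U\<close> DD.openin_mtopology by blast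
  then show ?thesis by (intro exI[of _ r]) (auto simp: dd_def)
qed

end


lemma diam_ge: "x \<in> S \<Longrightarrow> y \<in> S \<Longrightarrow> ereal (d x y) \<le> d_diam d S"
  unfolding d_diam_def by (rule SUP_upper2[of x]) (auto intro: SUP_upper)

lemma diam_le: "(\<And>x y. x \<in> S \<Longrightarrow> y \<in> S \<Longrightarrow> d x y \<le> c) \<Longrightarrow> d_diam d S \<le> ereal c"
  unfolding d_diam_def by (auto intro!: SUP_least)

primrec Vseq :: "(nat \<Rightarrow> 'a set) \<Rightarrow> nat \<Rightarrow> 'a::topological_group_add set" where
  "Vseq W 0 = UNIV"
| "Vseq W (Suc n) = (SOME V. open V \<and> 0 \<in> V \<and> (\<forall>x\<in>V. -x \<in> V) \<and>
      (\<forall>a\<in>V. \<forall>b\<in>V. \<forall>c\<in>V. a + b + c \<in> Vseq W n \<inter> W n))"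

declare Vseq.simps(2)[simp del]

lemma Vseq_props:
  fixes W :: "nat \<Rightarrow> 'a::topological_group_add set"
  assumes W: "\<And>n. open (W n)" "\<And>n. 0 \<in> W n"
  shows "open (Vseq W n) \<and> 0 \<in> Vseq W n \<and>
    (n > 0 \<longrightarrow> (\<forall>x\<in>Vseq W n. -x \<in> Vseq W n) \<and>
       (\<forall>a\<in>Vseq W n. \<forall>b\<in>Vseq W n. \<forall>c\<in>Vseq W n. a + b + c \<in> Vseq W (n - 1) \<inter> W (n - 1)))"
proof (induction n)
  case 0 then show ?case by simp
next
  case (Suc n)
  then have "open (Vseq W n \<inter> W n)" "0 \<in> Vseq W n \<inter> W n" using W by auto
  from tg_three[OF this] have ex: "\<exists>V. open V \<and> 0 \<in> V \<and> (\<forall>x\<in>V. -x \<in> V) \<and>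
      (\<forall>a\<in>V. \<forall>b\<in>V. \<forall>c\<in>V. a + b + c \<in> Vseq W n \<inter> W n)" .
  show ?case using someI_ex[OF ex] unfolding Vseq.simps(2) by simp
qed

theorem theorem2p2:
  assumes "metrizable_space (euclidean :: 'a::topological_group_add topology)"
  shows "Sc_nbd_open TYPE('a) \<longleftrightarrow>
         (\<forall>d :: 'a \<Rightarrow> 'a \<Rightarrow> real. compatible_metric d \<and> left_invariant d \<longrightarrow> Haver_wrt d)"
proof
  assume Sc: "Sc_nbd_open TYPE('a)"
  show "\<forall>d :: 'a \<Rightarrow> 'a \<Rightarrow> real. compatible_metric d \<and> left_invariant d \<longrightarrow> Haver_wrt d"
  proof (intro allI impI)
    fix d :: "'a \<Rightarrow> 'a \<Rightarrow> real"
    assume "compatible_metric d \<and> left_invariant d"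
    then have ms: "Metric_space UNIV d" and top: "Metric_space.mtopology UNIV d = euclidean"
      and li: "\<And>g x y. d (g + x) (g + y) = d x y"
      by (auto simp: compatible_metric_def left_invariant_def)
    interpret D: Metric_space UNIV d by (rule ms)
    show "Haver_wrt d" unfolding Haver_wrt_def
    proof (intro allI impI)
      fix \<epsilon> :: "nat \<Rightarrow> real" assume eps: "\<forall>n. 0 < \<epsilon> n"
      define U where "U n = D.mball 0 (\<epsilon> n / 3)" for n
      have Uo: "\<forall>n. open (U n) \<and> 0 \<in> U n"
      proof
        fix n
        have "openin D.mtopology (U n)" unfolding U_def by simp
        then have "open (U n)" using top by simp
        moreover have "0 \<in> U n" using eps by (simp add: U_def)
        ultimately show "open (U n) \<and> 0 \<in> U n" by simp
      qed
      have "\<exists>B :: nat \<Rightarrow> 'a set set.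
            (\<forall>n. disjoint (B n) \<and> (\<forall>b\<in>B n. open b) \<and> refines (B n) (nbd_cover (U n))) \<and>
            \<Union>(\<Union>n. B n) = UNIV"
        using Sc[unfolded Sc_nbd_open_def, rule_format, OF Uo[rule_format]] .
      then obtain B :: "nat \<Rightarrow> 'a set set" where
        B: "\<forall>n. disjoint (B n) \<and> (\<forall>b\<in>B n. open b) \<and> refines (B n) (nbd_cover (U n))"
        "\<Union>(\<Union>n. B n) = UNIV" by (elim exE conjE)
      have "d_diam d b < ereal (\<epsilon> n)" if b: "b \<in> B n" for b n
      proof -
        have "refines (B n) (nbd_cover (U n))" using B(1) by simp
        then obtain a where a: "a \<in> nbd_cover (U n)" "b \<subseteq> a" using b unfolding refines_def by auto
        then obtain x where x: "a = (\<lambda>y. x + y) ` U n" unfolding nbd_cover_def by auto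
        have "d p q \<le> 2 * \<epsilon> n / 3" if "p \<in> b" "q \<in> b" for p q
        proof -
          have "p \<in> (\<lambda>y. x + y) ` U n" "q \<in> (\<lambda>y. x + y) ` U n" using that a x by auto
          then obtain u v where u: "u \<in> U n" "p = x + u" and v: "v \<in> U n" "q = x + v" by auto
          have "d p q = d u v" using u v li by simp
          also have "\<dots> \<le> d u 0 + d 0 v" by (rule D.triangle) auto
          also have "\<dots> = d 0 u + d 0 v" by (simp add: D.commute)
          also have "\<dots> \<le> 2 * \<epsilon> n / 3" using u v by (simp add: U_def)
          finally show ?thesis .
        qed
        then have "d_diam d b \<le> ereal (2 * \<epsilon> n / 3)" by (rule diam_le)
        also have "\<dots> < ereal (\<epsilon> n)" using eps by simp
        finally show ?thesis .
      qed
      then show "\<exists>V :: nat \<Rightarrow> 'a set set. (\<forall>n. disjoint (V n) \<and> (\<forall>v\<in>V n. open v \<and> d_diam d v < ereal (\<epsilon> n))) \<and>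
            \<Union>(\<Union>n. V n) = UNIV"
      proof (intro exI[of _ B] conjI allI ballI)
        fix n show "disjoint (B n)" using B(1) by simp
        fix v assume "v \<in> B n"
        then show "open v" using B(1) by simp
        show "d_diam d v < ereal (\<epsilon> n)" using \<open>v \<in> B n\<close> by fact
      qed (use B(2) in simp)
    qed
  qed
next
  assume H: "\<forall>d :: 'a \<Rightarrow> 'a \<Rightarrow> real. compatible_metric d \<and> left_invariant d \<longrightarrow> Haver_wrt d"
  obtain M m where mm0: "Metric_space M m" and eu0: "(euclidean :: 'a topology) = Metric_space.mtopology M m"
    using assms unfolding metrizable_space_def by blast
  have "M = topspace (Metric_space.mtopology M m)" using Metric_space.topspace_mtopology[OF mm0] by simp
  also have "\<dots> = topspace euclidean" using eu0 by simp
  finally have MU: "M = UNIV" by simp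
  have mm: "Metric_space UNIV m" using mm0 MU by simp
  have eu: "(euclidean :: 'a topology) = Metric_space.mtopology UNIV m" using eu0 MU by simp
  interpret MM: Metric_space UNIV m by (rule mm)
  define W where "W n = MM.mball 0 (1 / (real n + 1))" for n
  have Wo: "open (W n)" for n
  proof -
    have "openin MM.mtopology (W n)" unfolding W_def by simp
    then show ?thesis using eu by (simp add: open_openin)
  qed
  have W0: "0 \<in> W n" for n unfolding W_def by simp
  note VP = Vseq_props[of W, OF Wo W0]
  have k1: "Vseq W 0 = UNIV" by simp
  have k2: "\<And>n. open (Vseq W n)" using VP by (rule conjunct1)
  have k3: "\<And>n. 0 \<in> Vseq W n" using VP by (rule conjunct1[OF conjunct2])
  have k4: "\<And>x n. x \<in> Vseq W n \<Longrightarrow> - x \<in> Vseq W n"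
  proof -
    fix x n assume x: "x \<in> Vseq W n"
    show "- x \<in> Vseq W n"
    proof (cases n)
      case 0 then show ?thesis by simp
    next
      case (Suc i)
      have "\<forall>x\<in>Vseq W (Suc i). - x \<in> Vseq W (Suc i)" using conjunct1[OF mp[OF VP[of "Suc i", THEN conjunct2, THEN conjunct2] zero_less_Suc]] .
      then show ?thesis using x Suc by simp
    qed
  qed
  have V3': "\<forall>a\<in>Vseq W (Suc n). \<forall>b\<in>Vseq W (Suc n). \<forall>c\<in>Vseq W (Suc n). a + b + c \<in> Vseq W n \<inter> W n" for n
    using conjunct2[OF mp[OF VP[of "Suc n", THEN conjunct2, THEN conjunct2] zero_less_Suc]]
    unfolding diff_Suc_1 .
  have k5: "\<And>a b c n. a \<in> Vseq W (Suc n) \<Longrightarrow> b \<in> Vseq W (Suc n) \<Longrightarrow> c \<in> Vseq W (Suc n) \<Longrightarrow> a + b + c \<in> Vseq W n"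
  proof -
    fix a b c n assume a: "a \<in> Vseq W (Suc n)" and b: "b \<in> Vseq W (Suc n)" and c: "c \<in> Vseq W (Suc n)"
    have "a + b + c \<in> Vseq W n \<inter> W n" using bspec[OF bspec[OF bspec[OF V3'[of n] a] b] c] .
    then show "a + b + c \<in> Vseq W n" by (rule IntD1)
  qed
  have VW: "Vseq W (Suc n) \<subseteq> W n" for n
  proof
    fix x assume "x \<in> Vseq W (Suc n)"
    then have "x + 0 + 0 \<in> Vseq W n \<inter> W n" using bspec[OF bspec[OF bspec[OF V3'[of n]]]] k3[of "Suc n"] by blast
    then show "x \<in> W n" by simp
  qed
  have k6: "\<And>x. (\<And>n. x \<in> Vseq W n) \<Longrightarrow> x = 0"
  proof -
    fix x assume that: "\<And>n. x \<in> Vseq W n"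
    have mlt: "m 0 x < 1 / (real n + 1)" for n
    proof -
      have "x \<in> W n" using subsetD[OF VW[of n] that[of "Suc n"]] .
      then show ?thesis by (simp add: W_def)
    qed
    have "m 0 x \<le> 0"
    proof (rule ccontr)
      assume "\<not> m 0 x \<le> 0"
      then have "m 0 x > 0" using MM.nonneg[of 0 x] by linarith
      then obtain n where "1 / of_nat (Suc n) < m 0 x" by (rule nat_approx_posE)
      with mlt[of n] show False by (simp add: add.commute)
    qed
    then have "m 0 x = 0" using MM.nonneg[of 0 x] by simp
    then show "x = 0" by simp
  qed
  have k7: "\<And>S. open S \<Longrightarrow> 0 \<in> S \<Longrightarrow> \<exists>n. Vseq W n \<subseteq> S"
  proof -
    fix S :: "'a set" assume that: "open S" "0 \<in> S"
    have "openin MM.mtopology S" using that eu by (simp add: open_openin)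
    then have "\<exists>r>0. MM.mball 0 r \<subseteq> S" using that(2) unfolding MM.openin_mtopology by simp
    then obtain r where r: "r > 0" "MM.mball 0 r \<subseteq> S" by blast
    obtain n where "1 / of_nat (Suc n) < r" using r(1) by (rule nat_approx_posE)
    then have n: "1 / (real n + 1) < r" by (simp add: add.commute)
    have "W n \<subseteq> MM.mball 0 r"
    proof
      fix y assume "y \<in> W n"
      then have "m 0 y < 1 / (real n + 1)" by (simp add: W_def)
      then have "m 0 y < r" using n by linarith
      then show "y \<in> MM.mball 0 r" by simp
    qed
    then have "W n \<subseteq> S" using r(2) by (rule subset_trans)
    then show "\<exists>n. Vseq W n \<subseteq> S" using VW[of n] by (intro exI[of _ "Suc n"]) (rule subset_trans)
  qed
  have "BK (Vseq W)" by (rule BK.intro[OF k1 k2 k3 k4 k5 k6 k7])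
  interpret B: BK "Vseq W" by fact
  have "compatible_metric B.dd \<and> left_invariant B.dd" using B.dd_compatible B.dd_left_inv by simp
  then have hv: "Haver_wrt B.dd" using H by simp
  show "Sc_nbd_open TYPE('a)" unfolding Sc_nbd_open_def
  proof (intro allI impI)
    fix U :: "nat \<Rightarrow> 'a set" assume U: "\<forall>n. open (U n) \<and> 0 \<in> U n"
    have "\<forall>n. \<exists>r>0. \<forall>w. B.N w < r \<longrightarrow> w \<in> U n"
    proof
      fix n show "\<exists>r>0. \<forall>w. B.N w < r \<longrightarrow> w \<in> U n" using U B.dd_ball[of "U n"] by simp
    qed
    then have "\<exists>r. \<forall>n. r n > 0 \<and> (\<forall>w. B.N w < r n \<longrightarrow> w \<in> U n)" by (rule choice)
    then obtain r where r: "\<And>n. r n > 0" "\<And>n w. B.N w < r n \<Longrightarrow> w \<in> U n" by blast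
    have rp: "\<forall>n. 0 < r n" using r(1) by simp
    have "\<exists>Vs :: nat \<Rightarrow> 'a set set. (\<forall>n. disjoint (Vs n) \<and> (\<forall>v\<in>Vs n. open v \<and> d_diam B.dd v < ereal (r n))) \<and>
          \<Union>(\<Union>n. Vs n) = UNIV"
      using hv[unfolded Haver_wrt_def, rule_format, OF rp[rule_format]] .
    then obtain Vs :: "nat \<Rightarrow> 'a set set" where
      Vs: "\<forall>n. disjoint (Vs n) \<and> (\<forall>v\<in>Vs n. open v \<and> d_diam B.dd v < ereal (r n))"
          "\<Union>(\<Union>n. Vs n) = UNIV" by (elim exE conjE)
    have "refines (Vs n) (nbd_cover (U n))" for n
      unfolding refines_def
    proof
      fix b assume b: "b \<in> Vs n"
      show "\<exists>a\<in>nbd_cover (U n). b \<subseteq> a"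
      proof (cases "b = {}")
        case True
        have "(\<lambda>z. 0 + z) ` U n \<in> nbd_cover (U n)"
          unfolding nbd_cover_def by (intro CollectI exI[of _ 0]) simp
        then show ?thesis using True by (intro bexI[of _ "(\<lambda>z. 0 + z) ` U n"]) simp_all
      next
        case False
        then obtain y where y: "y \<in> b" by blast
        have "b \<subseteq> (\<lambda>z. y + z) ` U n"
        proof
          fix z assume z: "z \<in> b"
          have "ereal (B.dd y z) \<le> d_diam B.dd b" by (rule diam_ge[OF y z])
          also have "\<dots> < ereal (r n)" using Vs(1) b by simp
          finally have "B.N (-y + z) < r n" by (simp add: B.dd_def)
          then have "-y + z \<in> U n" by (rule r(2))
          moreover have "z = y + (-y + z)" by (simp add: add.assoc[symmetric])
          ultimately show "z \<in> (\<lambda>z. y + z) ` U n" by (rule rev_image_eqI)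
        qed
        moreover have "(\<lambda>z. y + z) ` U n \<in> nbd_cover (U n)"
          unfolding nbd_cover_def by (intro CollectI exI[of _ y]) simp
        ultimately show ?thesis by (intro bexI[of _ "(\<lambda>z. y + z) ` U n"])
      qed
    qed
    then show "\<exists>B :: nat \<Rightarrow> 'a set set.
            (\<forall>n. disjoint (B n) \<and> (\<forall>b\<in>B n. open b) \<and> refines (B n) (nbd_cover (U n))) \<and>
            \<Union>(\<Union>n. B n) = UNIV"
    proof (intro exI[of _ Vs] conjI allI ballI)
      fix n show "disjoint (Vs n)" using Vs(1) by simp
      fix v assume "v \<in> Vs n"
      then show "open v" using Vs(1) by simp
    qed (use Vs(2) \<open>\<And>n. refines (Vs n) (nbd_cover (U n))\<close> in simp_all)
  qed
qed

end
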